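(* There is a constant $a_0>0$, depending only on $d$, $\Lambda$ and $\gamma$, such that for every domain $\Omega\subset\mathbb{R}^d$, every $u\in\mathcal{S}^F(\Omega)$, every $x_0\in\mathbb{R}^d$ and every $a\ge a_0$, $$L_u\big(au-|x-x_0|^\beta\big)\ge 0\qquad\text{in }\{u>0\}\cap\Omega,$$ where $\beta=\frac{2}{2-\gamma}$.
   Context: Fix $d\ge1$, $\Lambda\ge1$, $\gamma\in(1,2)$. $\mathcal{S}_d$ is the space of real symmetric $d\times d$ matrices. Standing assumptions on $F:\mathcal{S}_d\to\mathbb{R}$: (i) uniform ellipticity: $\frac1\Lambda\|P\|\le F(M+P)-F(M)\le\Lambda\|P\|$ for all $M,P\in\mathcal{S}_d$, $P\ge0$; (ii) $F$ is convex, $F(0)=0$, and the trace map is a sub-differential of $F$ at $0$; (iii) either $F$ is (Gâteaux) differentiable at $0$, or $F(\lambda M)=\lambda F(M)$ for all $\lambda>0$, $M\in\mathcal{S}_d$. A sub-differential of $F$ at $A$ is a linear map $S_A:\mathcal{S}_d\to\mathbb{R}$ with $S_A(M)\le F(A+M)-F(A)$ for all $M$. $\mathcal{S}^F(\Omega)$ is the class of continuous (viscosity, hence classical) solutions of $F(D^2u)=u^{\gamma-1}$, $u\ge0$ in $\Omega$. The linearized operator is $L_u(w)=S_{D^2u}(D^2w)-(\gamma-1)u^{\gamma-2}w$ in $\{u>0\}\cap\Omega$, where at each point $x$, $S_{D^2u}$ is a sub-differential of $F$ at $D^2u(x)$. *)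

theory Defs
  imports "HOL-Analysis.Analysis"
begin

text \<open>Real symmetric d x d matrices, d = CARD('n).\<close>
definition sym_mat :: "real^'n^'n \<Rightarrow> bool" where
  "sym_mat M \<longleftrightarrow> transpose M = M"

definition psd_mat :: "real^'n^'n \<Rightarrow> bool" where
  "psd_mat P \<longleftrightarrow> (\<forall>x. 0 \<le> x \<bullet> (P *v x))"

definition mat_norm :: "real^'n^'n \<Rightarrow> real" where
  "mat_norm P = onorm (\<lambda>x. P *v x)"

definition subdiff :: "(real^'n^'n \<Rightarrow> real) \<Rightarrow> real^'n^'n \<Rightarrow> (real^'n^'n \<Rightarrow> real) \<Rightarrow> bool" where
  "subdiff F A S \<longleftrightarrow> linear S \<and> (\<forall>M. sym_mat M \<longrightarrow> S M \<le> F (A + M) - F A)"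

definition unif_elliptic :: "real \<Rightarrow> (real^'n^'n \<Rightarrow> real) \<Rightarrow> bool" where
  "unif_elliptic \<Lambda> F \<longleftrightarrow> (\<forall>M P. sym_mat M \<and> sym_mat P \<and> psd_mat P \<longrightarrow>
      mat_norm P / \<Lambda> \<le> F (M + P) - F M \<and> F (M + P) - F M \<le> \<Lambda> * mat_norm P)"

definition gateaux_diff_at0 :: "(real^'n^'n \<Rightarrow> real) \<Rightarrow> bool" where
  "gateaux_diff_at0 F \<longleftrightarrow> (\<exists>L. linear L \<and> (\<forall>M. sym_mat M \<longrightarrow>
      ((\<lambda>t. (F (t *\<^sub>R M) - F 0) / t) \<longlongrightarrow> L M) (at 0)))"

definition pos_homog :: "(real^'n^'n \<Rightarrow> real) \<Rightarrow> bool" where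
  "pos_homog F \<longleftrightarrow> (\<forall>c>0. \<forall>M. sym_mat M \<longrightarrow> F (c *\<^sub>R M) = c * F M)"

definition admissible_F :: "real \<Rightarrow> (real^'n^'n \<Rightarrow> real) \<Rightarrow> bool" where
  "admissible_F \<Lambda> F \<longleftrightarrow> unif_elliptic \<Lambda> F
     \<and> convex_on {M. sym_mat M} F \<and> F 0 = 0 \<and> subdiff F 0 trace
     \<and> (gateaux_diff_at0 F \<or> pos_homog F)"

definition hessian_at :: "(real^'n \<Rightarrow> real) \<Rightarrow> real^'n^'n \<Rightarrow> real^'n \<Rightarrow> bool" where
  "hessian_at f H x \<longleftrightarrow> (\<exists>e>0. \<exists>Df.
      (\<forall>y\<in>ball x e. (f has_derivative (\<lambda>h. Df y \<bullet> h)) (at y))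
      \<and> (Df has_derivative (\<lambda>h. H *v h)) (at x))"

text \<open>Class S^F(Omega): classical nonnegative solutions of F(D^2 u) = u^(gamma-1).\<close>
definition sol_class :: "(real^'n^'n \<Rightarrow> real) \<Rightarrow> real \<Rightarrow> (real^'n) set \<Rightarrow> (real^'n \<Rightarrow> real) \<Rightarrow> bool" where
  "sol_class F \<gamma> \<Omega> u \<longleftrightarrow> continuous_on \<Omega> u \<and>
     (\<forall>x\<in>\<Omega>. 0 \<le> u x \<and> (\<exists>H. hessian_at u H x \<and> F H = u x powr (\<gamma> - 1)))"

text \<open>L_u(w) \<ge> 0 in {u>0} \<inter> Omega, for every choice of sub-differential S of F at D^2u(x).\<close>
definition lin_op_nonneg :: "(real^'n^'n \<Rightarrow> real) \<Rightarrow> real \<Rightarrow> (real^'n) set \<Rightarrow>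
    (real^'n \<Rightarrow> real) \<Rightarrow> (real^'n \<Rightarrow> real) \<Rightarrow> bool" where
  "lin_op_nonneg F \<gamma> \<Omega> u w \<longleftrightarrow> (\<forall>x\<in>\<Omega>. 0 < u x \<longrightarrow>
     (\<forall>Hu Hw S. hessian_at u Hu x \<and> hessian_at w Hw x \<and> subdiff F Hu S \<longrightarrow>
        0 \<le> S Hw - (\<gamma> - 1) * u x powr (\<gamma> - 2) * w x))"

end

theory Submission
  imports Defs
begin


lemma grad_unique:
  fixes A B :: "real^'n"
  assumes "(f has_derivative (\<lambda>h. A \<bullet> h)) (at y)" "(f has_derivative (\<lambda>h. B \<bullet> h)) (at y)"
  shows "A = B"
proof -
  have "(\<lambda>h. A \<bullet> h) = (\<lambda>h. B \<bullet> h)" using has_derivative_unique[OF assms] .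
  then have "A \<bullet> (A - B) = B \<bullet> (A - B)" by metis
  then have "(A - B) \<bullet> (A - B) = 0" by (simp add: inner_diff_left)
  then show ?thesis by simp
qed

lemma hessian_unique:
  assumes "hessian_at f H1 x" "hessian_at f H2 x"
  shows "H1 = H2"
proof -
  obtain e1 D1 where e1: "e1 > 0" "\<forall>y\<in>ball x e1. (f has_derivative (\<lambda>h. D1 y \<bullet> h)) (at y)"
    "(D1 has_derivative (\<lambda>h. H1 *v h)) (at x)" using assms(1) unfolding hessian_at_def by blast
  obtain e2 D2 where e2: "e2 > 0" "\<forall>y\<in>ball x e2. (f has_derivative (\<lambda>h. D2 y \<bullet> h)) (at y)"
    "(D2 has_derivative (\<lambda>h. H2 *v h)) (at x)" using assms(2) unfolding hessian_at_def by blast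
  have eq: "D1 y = D2 y" if "y \<in> ball x (min e1 e2)" for y
    using that e1(2) e2(2) grad_unique by (metis Int_iff ball_min_Int)
  have "(D2 has_derivative (\<lambda>h. H1 *v h)) (at x)"
    by (rule has_derivative_transform_within_open[OF e1(3), of "ball x (min e1 e2)"])
       (use e1 e2 eq in auto)
  from has_derivative_unique[OF this e2(3)] show ?thesis
    by (metis matrix_eq)
qed

lemma hessian_comb:
  assumes "hessian_at f H1 x" "hessian_at g H2 x"
  shows "hessian_at (\<lambda>y. a * f y - g y) (a *\<^sub>R H1 - H2) x"
proof -
  obtain e1 D1 where e1: "e1 > 0" "\<forall>y\<in>ball x e1. (f has_derivative (\<lambda>h. D1 y \<bullet> h)) (at y)"
    "(D1 has_derivative (\<lambda>h. H1 *v h)) (at x)" using assms(1) unfolding hessian_at_def by blast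
  obtain e2 D2 where e2: "e2 > 0" "\<forall>y\<in>ball x e2. (g has_derivative (\<lambda>h. D2 y \<bullet> h)) (at y)"
    "(D2 has_derivative (\<lambda>h. H2 *v h)) (at x)" using assms(2) unfolding hessian_at_def by blast
  have "\<forall>y\<in>ball x (min e1 e2). ((\<lambda>y. a * f y - g y) has_derivative (\<lambda>h. (a *\<^sub>R D1 y - D2 y) \<bullet> h)) (at y)"
  proof
    fix y assume "y \<in> ball x (min e1 e2)"
    then have "(f has_derivative (\<lambda>h. D1 y \<bullet> h)) (at y)" "(g has_derivative (\<lambda>h. D2 y \<bullet> h)) (at y)"
      using e1 e2 by auto
    then have "((\<lambda>y. a * f y - g y) has_derivative (\<lambda>h. a * (D1 y \<bullet> h) - D2 y \<bullet> h)) (at y)"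
      by (intro has_derivative_diff has_derivative_mult_right)
    then show "((\<lambda>y. a * f y - g y) has_derivative (\<lambda>h. (a *\<^sub>R D1 y - D2 y) \<bullet> h)) (at y)"
      by (simp add: inner_diff_left)
  qed
  moreover have "((\<lambda>y. a *\<^sub>R D1 y - D2 y) has_derivative (\<lambda>h. (a *\<^sub>R H1 - H2) *v h)) (at x)"
  proof -
    have "((\<lambda>y. a *\<^sub>R D1 y - D2 y) has_derivative (\<lambda>h. a *\<^sub>R (H1 *v h) - H2 *v h)) (at x)"
      by (intro has_derivative_diff has_derivative_scaleR_right e1(3) e2(3))
    then show ?thesis
      by (simp add: scaleR_matrix_vector_assoc matrix_vector_mult_diff_rdistrib)
  qed
  ultimately show ?thesis unfolding hessian_at_def using e1(1) e2(1)
    by (intro exI[of _ "min e1 e2"]) auto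
qed


lemma second_diff_est:
  fixes f :: "real^'n \<Rightarrow> real"
  assumes d: "d > 0"
    and fd: "\<And>y. norm (y - x) < d \<Longrightarrow> (f has_derivative (\<lambda>v. Df y \<bullet> v)) (at y)"
    and est: "\<And>y. norm (y - x) < d \<Longrightarrow> norm (Df y - Df x - H *v (y - x)) \<le> \<epsilon> * norm (y - x)"
    and eps: "\<epsilon> \<ge> 0"
    and hk: "norm h + norm k < d"
  shows "\<bar>f (x + h + k) - f (x + h) - f (x + k) + f x - (H *v k) \<bullet> h\<bar> \<le> 2 * \<epsilon> * (norm h + norm k)^2"
proof -
  define c where "c = (H *v k) \<bullet> h"
  define \<psi> where "\<psi> s = f (x + s *\<^sub>R h + k) - f (x + s *\<^sub>R h) - s * c" for s
  define \<psi>' where "\<psi>' s = (\<lambda>t. Df (x + s *\<^sub>R h + k) \<bullet> (t *\<^sub>R h) - Df (x + s *\<^sub>R h) \<bullet> (t *\<^sub>R h) - t * c)" for s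
  have nb: "norm (s *\<^sub>R h + k) < d" "norm (s *\<^sub>R h) < d" if "0 \<le> s" "s \<le> 1" for s
  proof -
    have "norm (s *\<^sub>R h) \<le> norm h" using that by (simp add: mult_left_le_one_le)
    then show "norm (s *\<^sub>R h + k) < d" "norm (s *\<^sub>R h) < d"
      using hk norm_triangle_ineq[of "s *\<^sub>R h" k] norm_ge_zero[of k] by linarith+
  qed
  have der: "(\<psi> has_derivative \<psi>' s) (at s)" if "0 \<le> s" "s \<le> 1" for s
  proof -
    have l1: "((\<lambda>s. x + s *\<^sub>R h + k) has_derivative (\<lambda>t. t *\<^sub>R h)) (at s)"
      by (auto intro!: derivative_eq_intros)
    have l2: "((\<lambda>s. x + s *\<^sub>R h) has_derivative (\<lambda>t. t *\<^sub>R h)) (at s)"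
      by (auto intro!: derivative_eq_intros)
    have f1: "(f has_derivative (\<lambda>v. Df (x + s *\<^sub>R h + k) \<bullet> v)) (at (x + s *\<^sub>R h + k))"
      using fd nb[OF that] by (simp add: add.assoc)
    have f2: "(f has_derivative (\<lambda>v. Df (x + s *\<^sub>R h) \<bullet> v)) (at (x + s *\<^sub>R h))"
      using fd nb[OF that] by simp
    have c1: "((\<lambda>s. f (x + s *\<^sub>R h + k)) has_derivative (\<lambda>t. Df (x + s *\<^sub>R h + k) \<bullet> (t *\<^sub>R h))) (at s)"
      using diff_chain_at[OF l1 f1] by (simp add: o_def)
    have c2: "((\<lambda>s. f (x + s *\<^sub>R h)) has_derivative (\<lambda>t. Df (x + s *\<^sub>R h) \<bullet> (t *\<^sub>R h))) (at s)"
      using diff_chain_at[OF l2 f2] by (simp add: o_def)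
    have c3: "((\<lambda>s. s * c) has_derivative (\<lambda>t. t * c)) (at s)"
      by (auto intro!: derivative_eq_intros)
    show ?thesis unfolding \<psi>_def \<psi>'_def
      by (intro has_derivative_diff c1 c2 c3)
  qed
  have cont: "continuous_on {0..1} \<psi>"
  proof (rule continuous_at_imp_continuous_on, rule ballI)
    fix s :: real assume "s \<in> {0..1}"
    then show "isCont \<psi> s" using der[of s] has_derivative_continuous by auto
  qed
  obtain s where s: "s \<in> {0<..<1}" "norm (\<psi> 1 - \<psi> 0) \<le> norm (\<psi>' s (1 - 0))"
    using mvt_general[of 0 1 \<psi> \<psi>', OF _ cont der] by auto
  define y1 where "y1 = x + s *\<^sub>R h + k"
  define y2 where "y2 = x + s *\<^sub>R h"
  have s01: "0 \<le> s" "s \<le> 1" using s by auto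
  have n1: "norm (y1 - x) < d" "norm (y2 - x) < d" using nb[OF s01] by (simp_all add: y1_def y2_def add.assoc)
  have n1': "norm (y1 - x) \<le> norm h + norm k" "norm (y2 - x) \<le> norm h + norm k"
  proof -
    have "norm (s *\<^sub>R h) \<le> norm h" using s01 by (simp add: mult_left_le_one_le)
    moreover have "norm (y1 - x) = norm (s *\<^sub>R h + k)" "norm (y2 - x) = norm (s *\<^sub>R h)"
      by (simp_all add: y1_def y2_def add.assoc)
    ultimately show "norm (y1 - x) \<le> norm h + norm k" "norm (y2 - x) \<le> norm h + norm k"
      using norm_triangle_ineq[of "s *\<^sub>R h" k] norm_ge_zero[of k] by linarith+
  qed
  define E1 where "E1 = Df y1 - Df x - H *v (y1 - x)"
  define E2 where "E2 = Df y2 - Df x - H *v (y2 - x)"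
  have kk: "y1 - x - (y2 - x) = k" by (simp add: y1_def y2_def)
  have "Df y1 - Df y2 = E1 - E2 + H *v k"
  proof -
    have "H *v (y1 - x) - H *v (y2 - x) = H *v k"
      using kk by (metis matrix_vector_mult_diff_distrib)
    then show ?thesis unfolding E1_def E2_def by (simp add: algebra_simps)
  qed
  then have "Df y1 - Df y2 - H *v k = E1 - E2" by simp
  moreover have "\<psi>' s (1 - 0) = (Df y1 - Df y2 - H *v k) \<bullet> h"
    unfolding \<psi>'_def c_def y1_def y2_def by (simp add: inner_diff_left)
  ultimately have "\<psi>' s (1 - 0) = (E1 - E2) \<bullet> h" by simp
  also have "\<bar>\<dots>\<bar> \<le> norm (E1 - E2) * norm h" by (rule Cauchy_Schwarz_ineq2)
  also have "\<dots> \<le> (2 * \<epsilon> * (norm h + norm k)) * norm h"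
  proof (rule mult_right_mono)
    have "norm E1 \<le> \<epsilon> * norm (y1 - x)" "norm E2 \<le> \<epsilon> * norm (y2 - x)"
      using est n1 unfolding E1_def E2_def by auto
    moreover have "\<epsilon> * norm (y1 - x) \<le> \<epsilon> * (norm h + norm k)" "\<epsilon> * norm (y2 - x) \<le> \<epsilon> * (norm h + norm k)"
      using n1' eps by (auto intro: mult_left_mono)
    ultimately show "norm (E1 - E2) \<le> 2 * \<epsilon> * (norm h + norm k)"
      using norm_triangle_ineq4[of E1 E2] by linarith
  qed simp
  also have "\<dots> \<le> 2 * \<epsilon> * (norm h + norm k)^2"
    using eps by (simp add: power2_eq_square mult_left_mono)
  finally have "\<bar>\<psi>' s (1 - 0)\<bar> \<le> 2 * \<epsilon> * (norm h + norm k)^2" .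
  moreover have "\<psi> 1 - \<psi> 0 = f (x + h + k) - f (x + h) - f (x + k) + f x - (H *v k) \<bullet> h"
    unfolding \<psi>_def c_def by simp
  ultimately show ?thesis using s(2) by simp
qed


lemma half_contr: "(a::real) \<le> a / 2 \<Longrightarrow> 0 < a \<Longrightarrow> False" by linarith

lemma hessian_symm:
  fixes f :: "real^'n \<Rightarrow> real"
  assumes "hessian_at f H x"
  shows "sym_mat H"
proof -
  obtain e Df where e: "e > 0" "\<forall>y\<in>ball x e. (f has_derivative (\<lambda>h. Df y \<bullet> h)) (at y)"
    "(Df has_derivative (\<lambda>h. H *v h)) (at x)" using assms unfolding hessian_at_def by blast
  have key: "\<bar>(H *v k) \<bullet> h - (H *v h) \<bullet> k\<bar> \<le> \<epsilon>" if "\<epsilon> > 0" for \<epsilon> and h k :: "real^'n"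
  proof -
    define C where "C = (norm h + norm k)^2 + 1"
    have C: "C > 0" unfolding C_def by (simp add: add_nonneg_pos)
    define \<epsilon>' where "\<epsilon>' = \<epsilon> / (4 * C)"
    have \<epsilon>': "\<epsilon>' > 0" unfolding \<epsilon>'_def using C that by simp
    obtain d0 where d0: "d0 > 0" "\<forall>y. norm (y - x) < d0 \<longrightarrow> norm (Df y - Df x - H *v (y - x)) \<le> \<epsilon>' * norm (y - x)"
      using e(3) \<epsilon>' unfolding has_derivative_at_alt by blast
    define d where "d = min d0 e"
    have d: "d > 0" using d0 e by (simp add: d_def)
    have fd: "(f has_derivative (\<lambda>v. Df y \<bullet> v)) (at y)" if "norm (y - x) < d" for y
      using e(2) that by (simp add: d_def dist_norm norm_minus_commute)
    have est: "norm (Df y - Df x - H *v (y - x)) \<le> \<epsilon>' * norm (y - x)" if "norm (y - x) < d" for y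
      using d0 that by (simp add: d_def)
    define t where "t = d / (2 * (norm h + norm k + 1))"
    have t: "t > 0" using d by (simp add: t_def add_nonneg_pos)
    have tlt: "t * (norm h + norm k) < d"
    proof -
      have "t * (norm h + norm k) \<le> t * (norm h + norm k + 1)" using t by simp
      also have "\<dots> = d / 2"
      proof -
        have "norm h + norm k + 1 > 0" by (simp add: add_nonneg_pos)
        then show ?thesis unfolding t_def by (simp add: field_simps)
      qed
      finally show ?thesis using d by simp
    qed
    define h' where "h' = t *\<^sub>R h"
    define k' where "k' = t *\<^sub>R k"
    have hk': "norm h' + norm k' = t * (norm h + norm k)"
      using t by (simp add: h'_def k'_def algebra_simps)
    have E1: "\<bar>f (x + h' + k') - f (x + h') - f (x + k') + f x - (H *v k') \<bullet> h'\<bar> \<le> 2 * \<epsilon>' * (norm h' + norm k')^2"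
      by (rule second_diff_est[OF d fd est]) (use \<epsilon>' hk' tlt in auto)
    have E2: "\<bar>f (x + k' + h') - f (x + k') - f (x + h') + f x - (H *v h') \<bullet> k'\<bar> \<le> 2 * \<epsilon>' * (norm k' + norm h')^2"
      by (rule second_diff_est[OF d fd est]) (use \<epsilon>' hk' tlt in auto)
    have xe: "x + k' + h' = x + h' + k'" by (simp add: algebra_simps)
    have E2': "\<bar>f (x + h' + k') - f (x + k') - f (x + h') + f x - (H *v h') \<bullet> k'\<bar> \<le> 2 * \<epsilon>' * (norm h' + norm k')^2"
      using E2 unfolding xe by (simp add: add.commute[of "norm k'"])
    have "\<bar>(H *v k') \<bullet> h' - (H *v h') \<bullet> k'\<bar> \<le> 4 * \<epsilon>' * (norm h' + norm k')^2"
      using E1 E2' by linarith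
    moreover have "(H *v k') \<bullet> h' - (H *v h') \<bullet> k' = t^2 * ((H *v k) \<bullet> h - (H *v h) \<bullet> k)"
      by (simp add: h'_def k'_def matrix_vector_mult_scaleR power2_eq_square right_diff_distrib)
    moreover have "(norm h' + norm k')^2 = t^2 * (norm h + norm k)^2"
      using hk' by (simp add: power_mult_distrib)
    ultimately have "\<bar>t^2 * ((H *v k) \<bullet> h - (H *v h) \<bullet> k)\<bar> \<le> 4 * \<epsilon>' * (t^2 * (norm h + norm k)^2)"
      by simp
    then have "t^2 * \<bar>(H *v k) \<bullet> h - (H *v h) \<bullet> k\<bar> \<le> t^2 * (4 * \<epsilon>' * (norm h + norm k)^2)"
      by (simp add: abs_mult mult.left_commute)
    then have "\<bar>(H *v k) \<bullet> h - (H *v h) \<bullet> k\<bar> \<le> 4 * \<epsilon>' * (norm h + norm k)^2"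
      using t by simp
    also have "\<dots> \<le> 4 * \<epsilon>' * C" using \<epsilon>' unfolding C_def by simp
    also have "\<dots> = \<epsilon>" unfolding \<epsilon>'_def using C by simp
    finally show ?thesis .
  qed
  have symm: "(H *v k) \<bullet> h = (H *v h) \<bullet> k" for h k
  proof -
    show ?thesis
    proof (rule ccontr)
      assume "(H *v k) \<bullet> h \<noteq> (H *v h) \<bullet> k"
      then have pos: "\<bar>(H *v k) \<bullet> h - (H *v h) \<bullet> k\<bar> > 0" by simp
      have "\<bar>(H *v k) \<bullet> h - (H *v h) \<bullet> k\<bar> \<le> \<bar>(H *v k) \<bullet> h - (H *v h) \<bullet> k\<bar> / 2"
        using key[of "\<bar>(H *v k) \<bullet> h - (H *v h) \<bullet> k\<bar> / 2" k h] pos by simp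
      then show False using pos by (rule half_contr)
    qed
  qed
  show ?thesis unfolding sym_mat_def
  proof (simp add: vec_eq_iff transpose_def, intro allI)
    fix i j
    have "H $ j $ i = (H *v axis i 1) $ j" by (metis cart_eq_inner_axis matrix_vector_mul_component)
    also have "\<dots> = (H *v axis i 1) \<bullet> axis j 1" by (simp add: cart_eq_inner_axis)
    also have "\<dots> = (H *v axis j 1) \<bullet> axis i 1" by (rule symm)
    also have "\<dots> = (H *v axis j 1) $ i" by (simp add: cart_eq_inner_axis)
    also have "\<dots> = H $ i $ j" by (metis cart_eq_inner_axis matrix_vector_mul_component)
    finally show "H $ j $ i = H $ i $ j" .
  qed
qed


lemma zero_deriv_powr:
  fixes f :: "real^'n \<Rightarrow> 'b::real_normed_vector"
  assumes f0: "f x0 = 0" and bd: "\<And>y. norm (f y) \<le> C * norm (y - x0) powr e" and e: "e > 1"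
  shows "(f has_derivative (\<lambda>h. 0)) (at x0)"
  unfolding has_derivative_iff_norm
proof (intro conjI bounded_linear_zero)
  have "((\<lambda>y. norm (y - x0)) \<longlongrightarrow> 0) (at x0)"
    by (intro tendsto_norm_zero LIM_zero tendsto_ident_at)
  then have "((\<lambda>y. norm (y - x0) powr (e - 1)) \<longlongrightarrow> 0) (at x0)"
    by (rule tendsto_zero_powrI) (use e in auto)
  then have lim: "((\<lambda>y. C * norm (y - x0) powr (e - 1)) \<longlongrightarrow> 0) (at x0)"
    by (rule tendsto_mult_right_zero)
  have ev: "\<forall>\<^sub>F y in at x0. norm (norm (f y - f x0 - 0) / norm (y - x0)) \<le> C * norm (y - x0) powr (e - 1)"
  proof (rule eventually_mono[OF eventually_at_ball'[of 1 x0 UNIV]], simp)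
    fix y assume "y \<in> ball x0 1 \<and> y \<noteq> x0 \<and> y \<in> UNIV"
    then have r: "norm (y - x0) > 0" by simp
    have "norm (y - x0) powr e = norm (y - x0) powr (e - 1) * norm (y - x0)"
      using r by (simp add: powr_diff)
    then have "norm (f y) / norm (y - x0) \<le> C * norm (y - x0) powr (e - 1)"
      using bd[of y] r by (simp add: divide_le_eq mult.assoc)
    then show "norm (norm (f y - f x0 - 0) / norm (y - x0)) \<le> C * norm (y - x0) powr (e - 1)"
      using f0 by simp
  qed
  show "((\<lambda>y. norm (f y - f x0 - 0) / norm (y - x0)) \<longlongrightarrow> 0) (at x0)"
    using Lim_null_comparison[OF ev lim] by simp
qed


definition outer :: "real^'n \<Rightarrow> real^'n^'n" where "outer v = (\<chi> i j. v$i * v$j)"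
definition rgrad :: "real^'n \<Rightarrow> real \<Rightarrow> real^'n \<Rightarrow> real^'n" where
  "rgrad x0 \<beta> y = (\<beta> * norm (y - x0) powr (\<beta> - 2)) *\<^sub>R (y - x0)"
definition rhess :: "real^'n \<Rightarrow> real \<Rightarrow> real^'n \<Rightarrow> real^'n^'n" where
  "rhess x0 \<beta> x = (\<beta> * norm (x - x0) powr (\<beta> - 2)) *\<^sub>R mat 1
     + (\<beta> * (\<beta> - 2) * norm (x - x0) powr (\<beta> - 4)) *\<^sub>R outer (x - x0)"

lemma outer_mult: "outer v *v h = (v \<bullet> h) *\<^sub>R v"
  by (simp add: vec_eq_iff matrix_vector_mult_def inner_vec_def outer_def sum_distrib_left sum_distrib_right mult_ac)

lemma rhess_mult: "rhess x0 \<beta> x *v h = (\<beta> * norm (x - x0) powr (\<beta> - 2)) *\<^sub>R h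
     + (\<beta> * (\<beta> - 2) * norm (x - x0) powr (\<beta> - 4) * ((x - x0) \<bullet> h)) *\<^sub>R (x - x0)"
  by (simp add: rhess_def matrix_vector_mult_add_rdistrib outer_mult flip: scaleR_matrix_vector_assoc)

lemma norm_diff_deriv:
  fixes y x0 :: "real^'n"
  assumes "y \<noteq> x0"
  shows "((\<lambda>y. norm (y - x0)) has_derivative (\<lambda>h. h \<bullet> sgn (y - x0))) (at y)"
proof -
  have "((\<lambda>y. y - x0) has_derivative (\<lambda>h. h)) (at y)" by (auto intro!: derivative_eq_intros)
  from diff_chain_at[OF this has_derivative_norm[of "y - x0"]] assms show ?thesis by (simp add: o_def)
qed

lemma rho_deriv:
  fixes y x0 :: "real^'n"
  assumes b: "\<beta> > 2"
  shows "((\<lambda>y. norm (y - x0) powr \<beta>) has_derivative (\<lambda>h. rgrad x0 \<beta> y \<bullet> h)) (at y)"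
proof (cases "y = x0")
  case True
  have "((\<lambda>y. norm (y - x0) powr \<beta>) has_derivative (\<lambda>h. 0)) (at x0)"
    by (rule zero_deriv_powr[where C=1 and e=\<beta>]) (use b in auto)
  then show ?thesis using True by (simp add: rgrad_def)
next
  case False
  then have r: "norm (y - x0) > 0" by simp
  have "((\<lambda>y. norm (y - x0) powr \<beta>) has_derivative
     (\<lambda>h. norm (y - x0) powr \<beta> * (0 * ln (norm (y - x0)) + (h \<bullet> sgn (y - x0)) * \<beta> / norm (y - x0)))) (at y)"
    by (rule has_derivative_powr[OF norm_diff_deriv[OF False] has_derivative_const r]) simp
  moreover have "(\<lambda>h. norm (y - x0) powr \<beta> * (0 * ln (norm (y - x0)) + (h \<bullet> sgn (y - x0)) * \<beta> / norm (y - x0)))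
     = (\<lambda>h. rgrad x0 \<beta> y \<bullet> h)"
  proof
    fix h
    have P: "norm (y - x0) powr \<beta> = norm (y - x0) powr (\<beta> - 2) * norm (y - x0)^2"
      using r by (simp add: powr_diff powr_realpow)
    have S: "h \<bullet> sgn (y - x0) = ((y - x0) \<bullet> h) / norm (y - x0)"
      unfolding sgn_div_norm inner_scaleR_right by (simp add: inner_commute field_simps)
    have R: "rgrad x0 \<beta> y \<bullet> h = \<beta> * norm (y - x0) powr (\<beta> - 2) * ((y - x0) \<bullet> h)"
      by (simp only: rgrad_def inner_scaleR_left)
    show "norm (y - x0) powr \<beta> * (0 * ln (norm (y - x0)) + (h \<bullet> sgn (y - x0)) * \<beta> / norm (y - x0)) = rgrad x0 \<beta> y \<bullet> h"
      unfolding S R P using r by (simp add: power2_eq_square field_simps)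
  qed
  ultimately show ?thesis by simp
qed

lemma rgrad_deriv:
  fixes x x0 :: "real^'n"
  assumes b: "\<beta> > 2"
  shows "(rgrad x0 \<beta> has_derivative (\<lambda>h. rhess x0 \<beta> x *v h)) (at x)"
proof (cases "x = x0")
  case True
  have "(rgrad x0 \<beta> has_derivative (\<lambda>h. 0)) (at x0)"
  proof (rule zero_deriv_powr[where C=\<beta> and e="\<beta> - 1"])
    show "rgrad x0 \<beta> x0 = 0" by (simp add: rgrad_def)
    fix y :: "real^'n"
    show "norm (rgrad x0 \<beta> y) \<le> \<beta> * norm (y - x0) powr (\<beta> - 1)"
    proof (cases "y = x0")
      case False
      then have r: "norm (y - x0) > 0" by simp
      have "norm (y - x0) powr (\<beta> - 1) = norm (y - x0) powr ((\<beta> - 2) + 1)" by simp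
      also have "\<dots> = norm (y - x0) powr (\<beta> - 2) * norm (y - x0)"
        by (simp only: powr_add) simp
      finally have "norm (y - x0) powr (\<beta> - 1) = norm (y - x0) powr (\<beta> - 2) * norm (y - x0)" .
      moreover have "norm (rgrad x0 \<beta> y) = \<beta> * norm (y - x0) powr (\<beta> - 2) * norm (y - x0)"
        using b by (simp only: rgrad_def norm_scaleR) simp
      ultimately show ?thesis by simp
    qed (simp add: rgrad_def)
  qed (use b in auto)
  moreover have "rhess x0 \<beta> x0 = 0" by (simp add: rhess_def)
  ultimately show ?thesis using True by simp
next
  case False
  then have r: "norm (x - x0) > 0" by simp
  have d1: "((\<lambda>y. \<beta> * norm (y - x0) powr (\<beta> - 2)) has_derivative
     (\<lambda>h. \<beta> * (norm (x - x0) powr (\<beta> - 2) * (0 * ln (norm (x - x0)) + (h \<bullet> sgn (x - x0)) * (\<beta> - 2) / norm (x - x0))))) (at x)"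
    by (rule has_derivative_mult_right, rule has_derivative_powr[OF norm_diff_deriv[OF False] has_derivative_const r]) simp
  have d2: "((\<lambda>y. y - x0) has_derivative (\<lambda>h. h)) (at x)" by (auto intro!: derivative_eq_intros)
  have "(rgrad x0 \<beta> has_derivative (\<lambda>h. (\<beta> * norm (x - x0) powr (\<beta> - 2)) *\<^sub>R h +
     (\<beta> * (norm (x - x0) powr (\<beta> - 2) * (0 * ln (norm (x - x0)) + (h \<bullet> sgn (x - x0)) * (\<beta> - 2) / norm (x - x0)))) *\<^sub>R (x - x0))) (at x)"
    unfolding rgrad_def[abs_def] by (rule has_derivative_scaleR[OF d1 d2])
  moreover have "(\<lambda>h. (\<beta> * norm (x - x0) powr (\<beta> - 2)) *\<^sub>R h +
     (\<beta> * (norm (x - x0) powr (\<beta> - 2) * (0 * ln (norm (x - x0)) + (h \<bullet> sgn (x - x0)) * (\<beta> - 2) / norm (x - x0)))) *\<^sub>R (x - x0))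
     = (\<lambda>h. rhess x0 \<beta> x *v h)"
  proof
    fix h
    have "norm (x - x0) powr (\<beta> - 2) = norm (x - x0) powr ((\<beta> - 4) + 2)" by simp
    also have "\<dots> = norm (x - x0) powr (\<beta> - 4) * norm (x - x0) powr 2"
      by (simp only: powr_add)
    finally have e: "norm (x - x0) powr (\<beta> - 2) = norm (x - x0) powr (\<beta> - 4) * norm (x - x0)^2"
      using r by (simp add: powr_realpow)
    have S: "h \<bullet> sgn (x - x0) = ((x - x0) \<bullet> h) / norm (x - x0)"
      unfolding sgn_div_norm inner_scaleR_right by (simp add: inner_commute field_simps)
    have "\<beta> * (norm (x - x0) powr (\<beta> - 2) * (0 * ln (norm (x - x0)) + (h \<bullet> sgn (x - x0)) * (\<beta> - 2) / norm (x - x0)))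
        = \<beta> * (\<beta> - 2) * norm (x - x0) powr (\<beta> - 4) * ((x - x0) \<bullet> h)"
      unfolding e S using r by (simp add: power2_eq_square field_simps)
    then show "(\<beta> * norm (x - x0) powr (\<beta> - 2)) *\<^sub>R h +
     (\<beta> * (norm (x - x0) powr (\<beta> - 2) * (0 * ln (norm (x - x0)) + (h \<bullet> sgn (x - x0)) * (\<beta> - 2) / norm (x - x0)))) *\<^sub>R (x - x0)
     = rhess x0 \<beta> x *v h"
      by (simp add: rhess_mult)
  qed
  ultimately show ?thesis by simp
qed

lemma rho_hessian:
  fixes x x0 :: "real^'n"
  assumes b: "\<beta> > 2"
  shows "hessian_at (\<lambda>y. norm (y - x0) powr \<beta>) (rhess x0 \<beta> x) x"
  unfolding hessian_at_def
  by (auto intro!: exI[of _ 1] exI[of _ "rgrad x0 \<beta>"] rho_deriv[OF b] rgrad_deriv[OF b])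


lemma key_real:
  fixes \<gamma> K U R a :: real
  assumes g1: "1 < \<gamma>" and g2: "\<gamma> < 2" and K: "K > 0" and U: "U > 0" and R: "R \<ge> 0"
    and a: "K * ((K / (\<gamma> - 1)) powr (1 / (2 - \<gamma>))) powr (\<gamma> - 1) / (2 - \<gamma>) \<le> a"
  shows "K * R powr (\<gamma> - 1) \<le> a * (2 - \<gamma>) * U powr (\<gamma> - 1) + (\<gamma> - 1) * U powr (\<gamma> - 2) * R"
proof -
  define k where "k = (K / (\<gamma> - 1)) powr (1 / (2 - \<gamma>))"
  have k0: "k \<ge> 0" unfolding k_def by simp
  have a': "K * k powr (\<gamma> - 1) \<le> a * (2 - \<gamma>)"
    using a g2 unfolding k_def[symmetric] by (simp add: divide_le_eq)
  have t2: "0 \<le> (\<gamma> - 1) * U powr (\<gamma> - 2) * R" using g1 R by simp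
  have t1: "0 \<le> a * (2 - \<gamma>) * U powr (\<gamma> - 1)"
  proof -
    have "0 \<le> K * k powr (\<gamma> - 1)" using K by simp
    then have "0 \<le> a * (2 - \<gamma>)" using a' by linarith
    then show ?thesis by simp
  qed
  show ?thesis
  proof (cases "R \<le> k * U")
    case True
    have "R powr (\<gamma> - 1) \<le> (k * U) powr (\<gamma> - 1)"
      by (rule powr_mono2) (use g1 R True in auto)
    also have "\<dots> = k powr (\<gamma> - 1) * U powr (\<gamma> - 1)" using k0 U by (simp add: powr_mult)
    finally have "K * R powr (\<gamma> - 1) \<le> K * k powr (\<gamma> - 1) * U powr (\<gamma> - 1)"
      using K by (simp add: mult.assoc mult_left_mono)
    also have "\<dots> \<le> a * (2 - \<gamma>) * U powr (\<gamma> - 1)"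
      using a' by (rule mult_right_mono) simp
    finally show ?thesis using t2 by linarith
  next
    case False
    then have RkU: "k * U < R" by simp
    moreover have "0 \<le> k * U" using k0 U by simp
    ultimately have Rp: "R > 0" by linarith
    have kk: "k powr (2 - \<gamma>) = K / (\<gamma> - 1)"
      unfolding k_def using g1 g2 K by (simp add: powr_powr)
    have "k < R / U" using RkU U by (simp add: field_simps)
    then have "k powr (2 - \<gamma>) \<le> (R / U) powr (2 - \<gamma>)"
      by (intro powr_mono2) (use g2 k0 in auto)
    then have ge: "K / (\<gamma> - 1) \<le> (R / U) powr (2 - \<gamma>)" using kk by simp
    have eq: "U powr (\<gamma> - 2) * R = R powr (\<gamma> - 1) * (R / U) powr (2 - \<gamma>)"
    proof -
      have "(R / U) powr (2 - \<gamma>) = R powr (2 - \<gamma>) / U powr (2 - \<gamma>)"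
        using Rp U by (simp add: powr_divide)
      moreover have "U powr (\<gamma> - 2) = 1 / U powr (2 - \<gamma>)"
        using U by (simp add: powr_minus_divide[symmetric])
      moreover have "R powr (\<gamma> - 1) * R powr (2 - \<gamma>) = R"
        using Rp by (simp flip: powr_add)
      ultimately show ?thesis by (simp add: field_simps)
    qed
    have "K * R powr (\<gamma> - 1) = (\<gamma> - 1) * R powr (\<gamma> - 1) * (K / (\<gamma> - 1))"
      using g1 by (simp add: field_simps)
    also have "\<dots> \<le> (\<gamma> - 1) * R powr (\<gamma> - 1) * (R / U) powr (2 - \<gamma>)"
      using ge g1 by (intro mult_left_mono) auto
    also have "\<dots> = (\<gamma> - 1) * U powr (\<gamma> - 2) * R" using eq by (simp add: mult.assoc)
    finally show ?thesis using t1 by linarith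
  qed
qed


lemma powr_m4: "(r::real) \<ge> 0 \<Longrightarrow> r powr (b - 4) * r^2 = r powr (b - 2)"
proof (cases "r = 0")
  case False
  assume "r \<ge> 0"
  then have r: "r > 0" using False by simp
  have "r powr (b - 2) = r powr ((b - 4) + 2)" by simp
  also have "\<dots> = r powr (b - 4) * r powr 2" by (simp only: powr_add)
  finally show ?thesis using r by (simp add: powr_realpow)
qed simp

lemma rhess_sym: "sym_mat (rhess x0 \<beta> x)"
  unfolding sym_mat_def rhess_def
  by (simp add: vec_eq_iff transpose_def outer_def mat_def mult.commute)

lemma rhess_psd: assumes "\<beta> > 2" shows "psd_mat (rhess x0 \<beta> x)"
  unfolding psd_mat_def
proof
  fix v :: "real^'a"
  have "v \<bullet> (rhess x0 \<beta> x *v v) = (\<beta> * norm (x - x0) powr (\<beta> - 2)) * (v \<bullet> v)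
     + (\<beta> * (\<beta> - 2) * norm (x - x0) powr (\<beta> - 4)) * ((x - x0) \<bullet> v)^2"
    by (simp add: rhess_mult inner_add_right power2_eq_square inner_commute mult.assoc)
  also have "\<dots> \<ge> 0" using assms by (intro add_nonneg_nonneg mult_nonneg_nonneg) auto
  finally show "0 \<le> v \<bullet> (rhess x0 \<beta> x *v v)" .
qed

lemma rhess_norm: assumes b: "\<beta> > 2"
  shows "mat_norm (rhess x0 \<beta> x) \<le> \<beta> * (\<beta> - 1) * norm (x - x0) powr (\<beta> - 2)"
  unfolding mat_norm_def
proof (rule onorm_le)
  fix v :: "real^'a"
  define r where "r = norm (x - x0)"
  define c1 where "c1 = \<beta> * r powr (\<beta> - 2)"
  define c2 where "c2 = \<beta> * (\<beta> - 2) * r powr (\<beta> - 4)"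
  have c1: "c1 \<ge> 0" and c2: "c2 \<ge> 0" using b by (auto simp: c1_def c2_def)
  have "norm (rhess x0 \<beta> x *v v) = norm (c1 *\<^sub>R v + (c2 * ((x - x0) \<bullet> v)) *\<^sub>R (x - x0))"
    by (simp add: rhess_mult c1_def c2_def r_def)
  also have "\<dots> \<le> norm (c1 *\<^sub>R v) + norm ((c2 * ((x - x0) \<bullet> v)) *\<^sub>R (x - x0))"
    by (rule norm_triangle_ineq)
  also have "\<dots> = c1 * norm v + c2 * \<bar>(x - x0) \<bullet> v\<bar> * r"
    using c1 c2 by (simp add: abs_mult r_def)
  also have "\<dots> \<le> c1 * norm v + c2 * (r * norm v) * r"
  proof -
    have "\<bar>(x - x0) \<bullet> v\<bar> \<le> r * norm v" unfolding r_def by (rule Cauchy_Schwarz_ineq2)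
    then have "c2 * \<bar>(x - x0) \<bullet> v\<bar> \<le> c2 * (r * norm v)" using c2 by (rule mult_left_mono)
    then show ?thesis by (simp add: r_def mult_right_mono)
  qed
  also have "\<dots> = (c1 + c2 * r^2) * norm v" by (simp add: algebra_simps power2_eq_square)
  also have "c2 * r^2 = \<beta> * (\<beta> - 2) * r powr (\<beta> - 2)"
    using powr_m4[of r \<beta>] by (simp add: c2_def r_def mult.assoc)
  also have "c1 + \<beta> * (\<beta> - 2) * r powr (\<beta> - 2) = \<beta> * (\<beta> - 1) * norm (x - x0) powr (\<beta> - 2)"
    by (simp add: c1_def r_def algebra_simps)
  finally show "norm (rhess x0 \<beta> x *v v) \<le> \<beta> * (\<beta> - 1) * norm (x - x0) powr (\<beta> - 2) * norm v" .
qed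


lemma sym_mat_neg: "sym_mat A \<Longrightarrow> sym_mat (- A)"
  unfolding sym_mat_def by (simp add: vec_eq_iff transpose_def)

theorem lemma2p9:
  fixes \<Lambda> \<gamma> :: real
  assumes "1 \<le> \<Lambda>" and "1 < \<gamma>" and "\<gamma> < 2"
  shows "\<exists>a\<^sub>0 > 0. \<forall>(F :: real^'n^'n \<Rightarrow> real) (\<Omega> :: (real^'n) set) u (x\<^sub>0 :: real^'n) a.
    admissible_F \<Lambda> F \<and> open \<Omega> \<and> connected \<Omega> \<and> sol_class F \<gamma> \<Omega> u \<and> a\<^sub>0 \<le> a \<longrightarrow>
    lin_op_nonneg F \<gamma> \<Omega> u (\<lambda>x. a * u x - norm (x - x\<^sub>0) powr (2 / (2 - \<gamma>)))"
proof -
  define \<beta> where "\<beta> = 2 / (2 - \<gamma>)"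
  have b2: "\<beta> > 2" using assms unfolding \<beta>_def by (simp add: field_simps)
  have bg: "\<beta> - 2 = \<beta> * (\<gamma> - 1)" using assms unfolding \<beta>_def by (simp add: field_simps)
  define K where "K = \<Lambda> * (\<beta> * (\<beta> - 1))"
  have K: "K > 0" using b2 assms unfolding K_def by simp
  define a0 where "a0 = K * ((K / (\<gamma> - 1)) powr (1 / (2 - \<gamma>))) powr (\<gamma> - 1) / (2 - \<gamma>) + 1"
  have a0: "a0 > 0"
  proof -
    have "0 \<le> K * ((K / (\<gamma> - 1)) powr (1 / (2 - \<gamma>))) powr (\<gamma> - 1) / (2 - \<gamma>)"
      using K assms by simp
    then show ?thesis unfolding a0_def by linarith
  qed
  show ?thesis
  proof (intro exI[of _ a0] conjI a0 allI impI)
    fix F :: "real^'n^'n \<Rightarrow> real" and \<Omega> :: "(real^'n) set" and u and x0 :: "real^'n" and a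
    assume H: "admissible_F \<Lambda> F \<and> open \<Omega> \<and> connected \<Omega> \<and> sol_class F \<gamma> \<Omega> u \<and> a0 \<le> a"
    then have adm: "admissible_F \<Lambda> F" and sol: "sol_class F \<gamma> \<Omega> u" and aa: "a0 \<le> a" by auto
    have ell: "unif_elliptic \<Lambda> F" and F0: "F 0 = 0" using adm unfolding admissible_F_def by auto
    show "lin_op_nonneg F \<gamma> \<Omega> u (\<lambda>x. a * u x - norm (x - x0) powr (2 / (2 - \<gamma>)))"
      unfolding lin_op_nonneg_def \<beta>_def[symmetric]
    proof (intro ballI impI allI)
      fix x Hu Hw S
      assume x: "x \<in> \<Omega>" and ux: "0 < u x"
        and hyp: "hessian_at u Hu x \<and> hessian_at (\<lambda>x. a * u x - norm (x - x0) powr \<beta>) Hw x \<and> subdiff F Hu S"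
      then have hu: "hessian_at u Hu x" and hw: "hessian_at (\<lambda>x. a * u x - norm (x - x0) powr \<beta>) Hw x"
        and sd: "subdiff F Hu S" by auto
      have lin: "linear S" and sdi: "\<And>M. sym_mat M \<Longrightarrow> S M \<le> F (Hu + M) - F Hu"
        using sd unfolding subdiff_def by auto
      obtain H0 where H0: "hessian_at u H0 x" "F H0 = u x powr (\<gamma> - 1)"
        using sol x unfolding sol_class_def by blast
      have FHu: "F Hu = u x powr (\<gamma> - 1)" using hessian_unique[OF hu H0(1)] H0(2) by simp
      have symu: "sym_mat Hu" by (rule hessian_symm[OF hu])
      define Rh where "Rh = rhess x0 \<beta> x"
      have hr: "hessian_at (\<lambda>y. norm (y - x0) powr \<beta>) Rh x" unfolding Rh_def by (rule rho_hessian[OF b2])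
      have Hw: "Hw = a *\<^sub>R Hu - Rh"
        by (rule hessian_unique[OF hw hessian_comb[OF hu hr]])
      have SHw: "S Hw = a * S Hu - S Rh"
        unfolding Hw using lin by (simp add: linear_diff linear_scale)
      have SHu: "S Hu \<ge> u x powr (\<gamma> - 1)"
      proof -
        have "S (- Hu) \<le> F (Hu + - Hu) - F Hu" by (rule sdi[OF sym_mat_neg[OF symu]])
        moreover have "S (- Hu) = - S Hu" using lin by (simp add: linear_neg)
        ultimately show ?thesis using F0 FHu by simp
      qed
      define R where "R = norm (x - x0) powr \<beta>"
      have SRh: "S Rh \<le> K * R powr (\<gamma> - 1)"
      proof -
        have "S Rh \<le> F (Hu + Rh) - F Hu" by (rule sdi) (simp add: Rh_def rhess_sym)
        also have "\<dots> \<le> \<Lambda> * mat_norm Rh"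
          using ell symu rhess_sym rhess_psd[OF b2] unfolding unif_elliptic_def Rh_def by blast
        also have "\<dots> \<le> \<Lambda> * (\<beta> * (\<beta> - 1) * norm (x - x0) powr (\<beta> - 2))"
          using rhess_norm[OF b2] assms unfolding Rh_def by (intro mult_left_mono) auto
        also have "norm (x - x0) powr (\<beta> - 2) = R powr (\<gamma> - 1)"
          unfolding R_def bg by (simp add: powr_powr)
        finally show ?thesis by (simp add: K_def mult.assoc)
      qed
      have R0: "R \<ge> 0" unfolding R_def by simp
      have kr: "K * R powr (\<gamma> - 1) \<le> a * (2 - \<gamma>) * u x powr (\<gamma> - 1) + (\<gamma> - 1) * u x powr (\<gamma> - 2) * R"
        by (rule key_real[OF assms(2,3) K ux R0]) (use aa in \<open>simp add: a0_def\<close>)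
      have uu: "u x powr (\<gamma> - 2) * u x = u x powr (\<gamma> - 1)"
      proof -
        have "u x powr (\<gamma> - 1) = u x powr ((\<gamma> - 2) + 1)" by simp
        also have "\<dots> = u x powr (\<gamma> - 2) * u x powr 1" by (simp only: powr_add)
        also have "\<dots> = u x powr (\<gamma> - 2) * u x" using ux by simp
        finally show ?thesis by simp
      qed
      have a_nn: "a \<ge> 0" using aa a0 by simp
      have "a * S Hu \<ge> a * u x powr (\<gamma> - 1)" using SHu a_nn by (rule mult_left_mono)
      then show "0 \<le> S Hw - (\<gamma> - 1) * u x powr (\<gamma> - 2) * (a * u x - norm (x - x0) powr \<beta>)"
        unfolding SHw R_def[symmetric] using SRh kr uu
        by (simp add: algebra_simps)
    qed
  qed
qed

end
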